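(* Let $k\ge1$ and $\ell\ge1$. Then $$\{n\in A_{2k}:\max\mathcal{CG}(n)=\max\mathcal{CG}_2(n)=F_{2k+2\ell}\}=\Big\{m+2F_{2k+2\ell}\ :\ m\in A_{2k},\ m\le\sum_{i=0}^{\ell-1}F_{2k+2i}\Big\}.$$
   Context: Fibonacci numbers: $F_1=F_2=1$, $F_{n+1}=F_n+F_{n-1}$ for $n\ge2$. Chung–Graham decomposition: every positive integer $n$ has a unique representation $n=\sum_{i\ge1}c_iF_{2i}$ with $c_i\in\{0,1,2\}$, only finitely many nonzero, such that whenever $c_i=c_j=2$ with $i<j$ there is $k$ with $i<k<j$ and $c_k=0$. Let $\mathcal{CG}(n)$ be the set of $F_{2i}$ with $c_i\neq0$, $\mathcal{CG}_1(n)$ the set of $F_{2i}$ with $c_i=1$, and $\mathcal{CG}_2(n)$ the set of $F_{2i}$ with $c_i=2$. For $k\ge1$, $A_{2k}=\{n\ge1:\min\mathcal{CG}(n)=F_{2k}\}$. *)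

theory Defs
  imports "HOL-Number_Theory.Fib"
begin

text \<open>Fibonacci numbers: the library fib has fib 0 = 0, fib 1 = fib 2 = 1, matching F_1 = F_2 = 1.
A Chung-Graham representation of n is a coefficient function c, where c i is the
coefficient of F_(2i) for i \<ge> 1 (c 0 = 0).\<close>

definition is_CG_rep :: "nat \<Rightarrow> (nat \<Rightarrow> nat) \<Rightarrow> bool" where
  "is_CG_rep n c \<longleftrightarrow>
     c 0 = 0 \<and> finite {i. c i \<noteq> 0} \<and> (\<forall>i. c i \<le> 2) \<and>
     (\<forall>i j. i < j \<and> c i = 2 \<and> c j = 2 \<longrightarrow> (\<exists>k. i < k \<and> k < j \<and> c k = 0)) \<and>
     n = (\<Sum>i\<in>{i. c i \<noteq> 0}. c i * fib (2 * i))"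

definition CG_coeff :: "nat \<Rightarrow> nat \<Rightarrow> nat" where
  "CG_coeff n = (THE c. is_CG_rep n c)"

definition CG :: "nat \<Rightarrow> nat set" where
  "CG n = {fib (2 * i) | i. i \<ge> 1 \<and> CG_coeff n i \<noteq> 0}"

definition CG1 :: "nat \<Rightarrow> nat set" where
  "CG1 n = {fib (2 * i) | i. i \<ge> 1 \<and> CG_coeff n i = 1}"

definition CG2 :: "nat \<Rightarrow> nat set" where
  "CG2 n = {fib (2 * i) | i. i \<ge> 1 \<and> CG_coeff n i = 2}"

definition A :: "nat \<Rightarrow> nat set" where
  "A k = {n. n \<ge> 1 \<and> Min (CG n) = fib (2 * k)}"

end

theory Submission
  imports Defs
begin

definition validc :: "(nat \<Rightarrow> nat) \<Rightarrow> bool" where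
  "validc c \<longleftrightarrow> c 0 = 0 \<and> (\<forall>i. c i \<le> 2) \<and>
     (\<forall>i j. i < j \<and> c i = 2 \<and> c j = 2 \<longrightarrow> (\<exists>k. i < k \<and> k < j \<and> c k = 0))"

definition closedc :: "(nat \<Rightarrow> nat) \<Rightarrow> nat \<Rightarrow> bool" where
  "closedc c j \<longleftrightarrow> (\<forall>i\<le>j. c i = 2 \<longrightarrow> (\<exists>z. i < z \<and> z \<le> j \<and> c z = 0))"

definition sm :: "(nat \<Rightarrow> nat) \<Rightarrow> nat \<Rightarrow> nat" where
  "sm c j = (\<Sum>i\<le>j. c i * fib (2*i))"

lemma fibS: "fib (Suc (Suc n)) = fib (Suc n) + fib n"
  by simp

lemma fibE: "fib (2 * Suc j) = fib (2*j+1) + fib (2*j)"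
  "fib (2 * Suc j + 1) = fib (2 * Suc j) + fib (2*j+1)"
  "fib (2 * Suc j + 2) = fib (2 * Suc j + 1) + fib (2 * Suc j)"
  "fib (2*j+2) = fib (2 * Suc j)"
  by (simp_all add: numeral_2_eq_2)

lemma sm_upd: "sm (c(Suc j := v)) (Suc j) = sm c j + v * fib (2 * Suc j)"
proof -
  have "(\<Sum>i\<le>j. (c(Suc j := v)) i * fib (2*i)) = (\<Sum>i\<le>j. c i * fib (2*i))"
    by (rule sum.cong) auto
  then show ?thesis by (simp add: sm_def)
qed

lemma sm_Suc: "sm c (Suc j) = sm c j + c (Suc j) * fib (2 * Suc j)"
  by (simp add: sm_def)

lemma bound:
  assumes v: "validc c"
  shows "sm c j < fib (2*j+2) \<and> (closedc c j \<longrightarrow> sm c j < fib (2*j+1))"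
proof (induction j)
  case 0
  then show ?case by (simp add: sm_def)
next
  case (Suc j)
  have s: "sm c (Suc j) = sm c j + c (Suc j) * fib (2 * Suc j)" by (rule sm_Suc)
  note f = fibE[of j]
  have H: "\<And>a b. a < b \<Longrightarrow> c a = 2 \<Longrightarrow> c b = 2 \<Longrightarrow> \<exists>k. a < k \<and> k < b \<and> c k = 0"
    using v unfolding validc_def by blast
  have c1: "closedc c j" if t: "c (Suc j) = 2"
    unfolding closedc_def
  proof (intro allI impI)
    fix i assume i: "i \<le> j" "c i = 2"
    have "i < Suc j" using i by simp
    from H[OF this i(2) t] obtain z where "i < z" "z < Suc j" "c z = 0" by blast
    then show "\<exists>z. i < z \<and> z \<le> j \<and> c z = 0" by auto
  qed
  have c2: "closedc c j" if t: "closedc c (Suc j)" "c (Suc j) \<noteq> 0"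
    unfolding closedc_def
  proof (intro allI impI)
    fix i assume i: "i \<le> j" "c i = 2"
    have "i \<le> Suc j" using i by simp
    then obtain z where z: "i < z" "z \<le> Suc j" "c z = 0"
      using t(1) i(2) unfolding closedc_def by blast
    then have "z \<noteq> Suc j" using t(2) by auto
    then show "\<exists>z. i < z \<and> z \<le> j \<and> c z = 0" using z by auto
  qed
  have c3: "c (Suc j) \<noteq> 2" if "closedc c (Suc j)"
  proof
    assume "c (Suc j) = 2"
    have "Suc j \<le> Suc j \<longrightarrow> c (Suc j) = 2 \<longrightarrow> (\<exists>z. Suc j < z \<and> z \<le> Suc j \<and> c z = 0)"
      using that unfolding closedc_def by (rule spec)
    then show False using \<open>c (Suc j) = 2\<close> by auto
  qed
  have "c (Suc j) \<le> 2" using v by (simp add: validc_def)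
  have IH1: "sm c j < fib (2 * Suc j)" using Suc.IH f(4) by linarith
  have IH2: "closedc c j \<Longrightarrow> sm c j < fib (2*j+1)" using Suc.IH by blast
  consider "c (Suc j) = 0" | "c (Suc j) = 1" | "c (Suc j) = 2" using \<open>c (Suc j) \<le> 2\<close> by linarith
  then show ?case
  proof cases
    case 1
    then have "sm c (Suc j) = sm c j" using s by simp
    then show ?thesis using IH1 f(1,2,3) by linarith
  next
    case 2
    then have e: "sm c (Suc j) = sm c j + fib (2 * Suc j)" using s by simp
    have "closedc c (Suc j) \<longrightarrow> sm c (Suc j) < fib (2 * Suc j + 1)"
      using c2 IH2 e f(2) 2 by fastforce
    then show ?thesis using IH1 e f(1,2,3) by linarith
  next
    case 3
    then have e: "sm c (Suc j) = sm c j + 2 * fib (2 * Suc j)" using s by simp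
    have "sm c j < fib (2*j+1)" using c1 IH2 3 by blast
    moreover have "\<not> closedc c (Suc j)" using c3 3 by blast
    moreover have "sm c (Suc j) < fib (2*Suc j+2)" using e f(1,2,3) calculation by linarith
    ultimately show ?thesis by blast
  qed
qed

lemma top_lt:
  assumes "validc d" "c (Suc J) > d (Suc J)"
  shows "sm d (Suc J) < sm c (Suc J)"
proof -
  have b: "sm d J < fib (2 * Suc J)" using bound[OF assms(1), of J] fibE(4)[of J] by simp
  have "sm d (Suc J) = sm d J + d (Suc J) * fib (2 * Suc J)" by (rule sm_Suc)
  also have "\<dots> < (d (Suc J) + 1) * fib (2 * Suc J)" using b by simp
  also have "\<dots> \<le> c (Suc J) * fib (2 * Suc J)" using assms(2) by (intro mult_le_mono1) simp
  also have "\<dots> \<le> sm c (Suc J)" by (simp add: sm_Suc)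
  finally show ?thesis .
qed

lemma uniq_aux: "validc c \<Longrightarrow> validc d \<Longrightarrow> (\<forall>i>J. c i = d i) \<Longrightarrow> sm c J = sm d J \<Longrightarrow> c = d"
proof (induction J)
  case 0
  show ?case
  proof
    fix i show "c i = d i"
    proof (cases "i = 0")
      case True then show ?thesis using "0.prems"(1,2) by (simp add: validc_def)
    next
      case False then show ?thesis using "0.prems"(3) by simp
    qed
  qed
next
  case (Suc J)
  have e: "c (Suc J) = d (Suc J)"
  proof (rule ccontr)
    assume "c (Suc J) \<noteq> d (Suc J)"
    then consider "c (Suc J) > d (Suc J)" | "d (Suc J) > c (Suc J)" by linarith
    then show False
    proof cases
      case 1 show False using top_lt[where d=d and c=c and J=J, OF Suc.prems(2) 1] Suc.prems(4) by linarith
    next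
      case 2 show False using top_lt[where d=c and c=d and J=J, OF Suc.prems(1) 2] Suc.prems(4) by linarith
    qed
  qed
  have "sm c J = sm d J" using Suc.prems(4) e by (simp add: sm_Suc)
  moreover have "\<forall>i>J. c i = d i"
  proof (intro allI impI)
    fix i assume "J < i"
    then consider "i = Suc J" | "Suc J < i" by linarith
    then show "c i = d i" using e Suc.prems(3) by cases auto
  qed
  ultimately show ?case using Suc.IH Suc.prems(1,2) by blast
qed

lemma upd1_valid:
  assumes "validc c" "\<forall>i>j. c i = 0"
  shows "validc (c(Suc j := 1))"
  unfolding validc_def
proof (intro conjI allI impI)
  show "(c(Suc j := 1)) 0 = 0" using assms(1) by (simp add: validc_def)
  fix i show "(c(Suc j := 1)) i \<le> 2" using assms(1) by (simp add: validc_def)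
next
  fix i i' assume h: "i < i' \<and> (c(Suc j := 1)) i = 2 \<and> (c(Suc j := 1)) i' = 2"
  then have ci': "c i' = 2" "i' \<noteq> Suc j" by (auto split: if_splits)
  then have "i' \<le> j" using assms(2) by (metis not_le zero_neq_numeral)
  have "c i = 2" using h by (auto split: if_splits)
  have H: "\<And>a b. a < b \<Longrightarrow> c a = 2 \<Longrightarrow> c b = 2 \<Longrightarrow> \<exists>k. a < k \<and> k < b \<and> c k = 0"
    using assms(1) unfolding validc_def by blast
  obtain z where z: "i < z" "z < i'" "c z = 0" using H[OF _ \<open>c i = 2\<close> ci'(1)] h by blast
  have "z \<noteq> Suc j" using z(2) \<open>i' \<le> j\<close> by simp
  then have "(c(Suc j := 1)) z = 0" using z(3) by simp
  then show "\<exists>k>i. k < i' \<and> (c(Suc j := 1)) k = 0" using z(1,2) by blast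
qed

lemma upd2_valid:
  assumes "validc c" "\<forall>i>j. c i = 0" "closedc c j"
  shows "validc (c(Suc j := 2))"
  unfolding validc_def
proof (intro conjI allI impI)
  show "(c(Suc j := 2)) 0 = 0" using assms(1) by (simp add: validc_def)
  fix i show "(c(Suc j := 2)) i \<le> 2" using assms(1) by (simp add: validc_def)
next
  fix i i' assume h: "i < i' \<and> (c(Suc j := 2)) i = 2 \<and> (c(Suc j := 2)) i' = 2"
  show "\<exists>k>i. k < i' \<and> (c(Suc j := 2)) k = 0"
  proof (cases "i' = Suc j")
    case True
    then have "i \<le> j" "c i = 2" using h by auto
    then obtain z where z: "i < z" "z \<le> j" "c z = 0"
      using assms(3)[unfolded closedc_def] by blast
    have "z \<noteq> Suc j" using z(2) by simp
    then have "(c(Suc j := 2)) z = 0" using z(3) by simp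
    moreover have "z < i'" using z(2) True by simp
    ultimately show ?thesis using z(1) by blast
  next
    case False
    then have ci': "c i' = 2" using h by auto
    then have "i' \<le> j" using assms(2) by (metis not_le zero_neq_numeral)
    then have "i \<noteq> Suc j" using h by auto
    then have "c i = 2" using h by auto
    have H: "\<And>a b. a < b \<Longrightarrow> c a = 2 \<Longrightarrow> c b = 2 \<Longrightarrow> \<exists>k. a < k \<and> k < b \<and> c k = 0"
      using assms(1) unfolding validc_def by blast
    obtain z where z: "i < z" "z < i'" "c z = 0" using H[OF _ \<open>c i = 2\<close> ci'] h by blast
    have "z \<noteq> Suc j" using z(2) \<open>i' \<le> j\<close> by simp
    then have "(c(Suc j := 2)) z = 0" using z(3) by simp
    then show ?thesis using z(1,2) by blast
  qed
qed

lemma upd1_closed: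
  assumes "closedc c j"
  shows "closedc (c(Suc j := 1)) (Suc j)"
  unfolding closedc_def
proof (intro allI impI)
  fix i assume "i \<le> Suc j" "(c(Suc j := 1)) i = 2"
  note h = this
  have ne: "i \<noteq> Suc j"
  proof
    assume "i = Suc j" then show False using h(2) by simp
  qed
  have i: "i \<le> j" "c i = 2" using h ne by simp_all
  obtain z where z: "i < z" "z \<le> j" "c z = 0"
    using assms[unfolded closedc_def, rule_format, OF i] by blast
  have "z \<noteq> Suc j" using z(2) by simp
  then have "(c(Suc j := 1)) z = 0" using z(3) by simp
  moreover have "z \<le> Suc j" using z(2) by simp
  ultimately show "\<exists>z>i. z \<le> Suc j \<and> (c(Suc j := 1)) z = 0" using z(1) by blast
qed

lemma supp_closed:
  assumes "\<forall>i>j. c i = 0"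
  shows "closedc c (Suc j)"
  unfolding closedc_def
proof (intro allI impI)
  fix i assume "i \<le> Suc j" "c i = 2"
  moreover have "c (Suc j) = 0" using assms by simp
  ultimately have "i \<noteq> Suc j" by auto
  with \<open>i \<le> Suc j\<close> have "i < Suc j" by simp
  then show "\<exists>z>i. z \<le> Suc j \<and> c z = 0" using \<open>c (Suc j) = 0\<close> by blast
qed

lemma exist:
  "(\<forall>n < fib (2*j+2). \<exists>c. validc c \<and> (\<forall>i>j. c i = 0) \<and> sm c j = n) \<and>
   (\<forall>n < fib (2*j+1). \<exists>c. validc c \<and> (\<forall>i>j. c i = 0) \<and> closedc c j \<and> sm c j = n)"
proof (induction j)
  case 0
  have "validc (\<lambda>_. 0)" "closedc (\<lambda>_. 0) 0" by (simp_all add: validc_def closedc_def)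
  then show ?case by (auto simp: sm_def intro!: exI[of _ "\<lambda>_. 0"])
next
  case (Suc j)
  note f = fibE[of j]
  have IHP: "\<forall>n < fib (2 * Suc j). \<exists>c. validc c \<and> (\<forall>i>j. c i = 0) \<and> sm c j = n"
    using Suc.IH unfolding f(4) by blast
  have IHQ: "\<forall>n < fib (2*j+1). \<exists>c. validc c \<and> (\<forall>i>j. c i = 0) \<and> closedc c j \<and> sm c j = n"
    using Suc.IH by blast
  have sup: "\<forall>i>Suc j. (c(Suc j := v)) i = 0" if "\<forall>i>j. c i = 0" for c v
    using that by auto
  have P: "\<exists>c. validc c \<and> (\<forall>i>Suc j. c i = 0) \<and> sm c (Suc j) = n" if n: "n < fib (2 * Suc j + 2)" for n
  proof -
    consider "n < fib (2 * Suc j)" | "fib (2 * Suc j) \<le> n" "n < 2 * fib (2 * Suc j)"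
      | "2 * fib (2 * Suc j) \<le> n" by linarith
    then show ?thesis
    proof cases
      case 1
      then obtain c where c: "validc c" "\<forall>i>j. c i = 0" "sm c j = n" using IHP by blast
      have "sm c (Suc j) = n" using c by (simp add: sm_Suc)
      moreover have "\<forall>i>Suc j. c i = 0" using c(2) by simp
      ultimately show ?thesis using c(1) by blast
    next
      case 2
      then have "n - fib (2 * Suc j) < fib (2 * Suc j)" by linarith
      then obtain c where c: "validc c" "\<forall>i>j. c i = 0" "sm c j = n - fib (2 * Suc j)"
        using IHP by blast
      have "sm (c(Suc j := 1)) (Suc j) = n" using c(3) 2 by (simp add: sm_upd)
      then show ?thesis using upd1_valid[OF c(1,2)] sup[OF c(2)] by blast
    next
      case 3
      have "n - 2 * fib (2 * Suc j) < fib (2*j+1)" using 3 n f(1,2,3) by linarith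
      then obtain c where c: "validc c" "\<forall>i>j. c i = 0" "closedc c j" "sm c j = n - 2 * fib (2 * Suc j)"
        using IHQ by blast
      have "sm (c(Suc j := 2)) (Suc j) = n" using c(4) 3 by (simp add: sm_upd)
      then show ?thesis using upd2_valid[OF c(1,2,3)] sup[OF c(2)] by blast
    qed
  qed
  have Q: "\<exists>c. validc c \<and> (\<forall>i>Suc j. c i = 0) \<and> closedc c (Suc j) \<and> sm c (Suc j) = n"
    if n: "n < fib (2 * Suc j + 1)" for n
  proof -
    consider "n < fib (2 * Suc j)" | "fib (2 * Suc j) \<le> n" by linarith
    then show ?thesis
    proof cases
      case 1
      then obtain c where c: "validc c" "\<forall>i>j. c i = 0" "sm c j = n" using IHP by blast
      have "sm c (Suc j) = n" using c by (simp add: sm_Suc)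
      moreover have "\<forall>i>Suc j. c i = 0" using c(2) by simp
      ultimately show ?thesis using c(1) supp_closed[OF c(2)] by blast
    next
      case 2
      have "n - fib (2 * Suc j) < fib (2*j+1)" using 2 n f(2) by linarith
      then obtain c where c: "validc c" "\<forall>i>j. c i = 0" "closedc c j" "sm c j = n - fib (2 * Suc j)"
        using IHQ by blast
      have "sm (c(Suc j := 1)) (Suc j) = n" using c(4) 2 by (simp add: sm_upd)
      then show ?thesis using upd1_valid[OF c(1,2)] upd1_closed[OF c(3)] sup[OF c(2)] by blast
    qed
  qed
  show ?case using P Q by blast
qed


lemma cl1: assumes v: "validc c" and t: "c (Suc j) = 2" shows "closedc c j"
  unfolding closedc_def
proof (intro allI impI)
  have H: "\<And>a b. a < b \<Longrightarrow> c a = 2 \<Longrightarrow> c b = 2 \<Longrightarrow> \<exists>k. a < k \<and> k < b \<and> c k = 0"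
    using v unfolding validc_def by blast
  fix i assume i: "i \<le> j" "c i = 2"
  have "i < Suc j" using i by simp
  from H[OF this i(2) t] obtain z where "i < z" "z < Suc j" "c z = 0" by blast
  then show "\<exists>z. i < z \<and> z \<le> j \<and> c z = 0" by auto
qed

lemma cl2: assumes t: "closedc c (Suc j)" "c (Suc j) \<noteq> 0" shows "closedc c j"
  unfolding closedc_def
proof (intro allI impI)
  fix i assume i: "i \<le> j" "c i = 2"
  have "i \<le> Suc j" using i by simp
  then obtain z where z: "i < z" "z \<le> Suc j" "c z = 0"
    using t(1) i(2) unfolding closedc_def by blast
  then have "z \<noteq> Suc j" using t(2) by auto
  then show "\<exists>z. i < z \<and> z \<le> j \<and> c z = 0" using z by auto
qed

lemma cl3: assumes "closedc c (Suc j)" shows "c (Suc j) \<noteq> 2"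
proof
  assume "c (Suc j) = 2"
  have "Suc j \<le> Suc j \<longrightarrow> c (Suc j) = 2 \<longrightarrow> (\<exists>z. Suc j < z \<and> z \<le> Suc j \<and> c z = 0)"
    using assms unfolding closedc_def by (rule spec)
  then show False using \<open>c (Suc j) = 2\<close> by auto
qed

lemma blockB:
  assumes v: "validc d"
  shows "(\<Sum>i\<in>{k..j}. d i * fib (2*i)) \<le> (\<Sum>i\<in>{k..j}. fib (2*i)) + fib (2*j) \<and>
    (closedc d j \<longrightarrow> (\<Sum>i\<in>{k..j}. d i * fib (2*i)) \<le> (\<Sum>i\<in>{k..j}. fib (2*i)))"
proof (induction j)
  case 0
  then show ?case by (cases k) simp_all
next
  case (Suc j)
  show ?case
  proof (cases "k \<le> Suc j")
    case False
    then show ?thesis by simp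
  next
    case True
    define D where "D = (\<Sum>i\<in>{k..j}. d i * fib (2*i))"
    define T where "T = (\<Sum>i\<in>{k..j}. fib (2*i))"
    have e1: "(\<Sum>i\<in>{k..Suc j}. d i * fib (2*i)) = D + d (Suc j) * fib (2 * Suc j)"
      unfolding D_def using True by (simp add: atLeastAtMostSuc_conv)
    have e2: "(\<Sum>i\<in>{k..Suc j}. fib (2*i)) = T + fib (2 * Suc j)"
      unfolding T_def using True by (simp add: atLeastAtMostSuc_conv)
    have IH1: "D \<le> T + fib (2*j)" and IH2: "closedc d j \<Longrightarrow> D \<le> T"
      using Suc.IH unfolding D_def T_def by blast+
    have m: "fib (2*j) \<le> fib (2 * Suc j)" by (rule fib_mono) simp
    have "d (Suc j) \<le> 2" using v by (simp add: validc_def)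
    then consider "d (Suc j) = 0" | "d (Suc j) = 1" | "d (Suc j) = 2" by linarith
    then show ?thesis
    proof cases
      case 1
      then show ?thesis unfolding e1 e2 using IH1 m by simp
    next
      case 2
      have "closedc d (Suc j) \<longrightarrow> D + d (Suc j) * fib (2 * Suc j) \<le> T + fib (2 * Suc j)"
        using cl2[of d j] IH2 2 by simp
      then show ?thesis unfolding e1 e2 using IH1 m 2 by simp
    next
      case 3
      have "D \<le> T" using IH2 cl1[OF v 3] by blast
      moreover have "\<not> closedc d (Suc j)" using cl3 3 by blast
      ultimately show ?thesis unfolding e1 e2 using 3 by simp
    qed
  qed
qed

lemma Tlt: "(\<Sum>i\<in>{k..j}. fib (2*i)) < fib (2 * Suc j)"
proof (induction j)
  case 0
  then show ?case by (cases k) simp_all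
next
  case (Suc j)
  have p: "0 < fib (2 * Suc (Suc j))" by (rule fib_neq_0_nat) simp
  have r: "fib (2 * Suc (Suc j)) = fib (2 * Suc j + 1) + fib (2 * Suc j)" using fibE(1)[of "Suc j"] by simp
  have m: "fib (2 * Suc j) \<le> fib (2 * Suc j + 1)" by (rule fib_mono) simp
  show ?case
  proof (cases "k \<le> Suc j")
    case False
    then show ?thesis using p by simp
  next
    case True
    have "(\<Sum>i\<in>{k..Suc j}. fib (2*i)) = (\<Sum>i\<in>{k..j}. fib (2*i)) + fib (2 * Suc j)"
      using True by (simp add: atLeastAtMostSuc_conv)
    then show ?thesis using Suc.IH r m by linarith
  qed
qed

lemma n_lt_fib: "n < fib (2*n+2)"
proof (induction n)
  case 0 then show ?case by simp
next
  case (Suc n)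
  have p: "0 < fib (2 * Suc n + 1)" by (rule fib_neq_0_nat) simp
  have "fib (2 * Suc n + 2) = fib (2 * Suc n + 1) + fib (2 * Suc n)" by (rule fibE(3))
  moreover have "fib (2*n+2) = fib (2 * Suc n)" by (rule fibE(4))
  ultimately show ?case using Suc.IH p by linarith
qed

lemma sm_eq_sum:
  assumes "\<forall>i>j. c i = 0"
  shows "(\<Sum>i\<in>{i. c i \<noteq> 0}. c i * fib (2*i)) = sm c j"
  unfolding sm_def
proof (rule sum.mono_neutral_left)
  show "finite {..j}" by simp
  show "{i. c i \<noteq> 0} \<subseteq> {..j}"
  proof
    fix x assume "x \<in> {i. c i \<noteq> 0}"
    then have "c x \<noteq> 0" by simp
    then have "\<not> j < x" using assms by (metis)
    then show "x \<in> {..j}" by simp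
  qed
  show "\<forall>i\<in>{..j} - {i. c i \<noteq> 0}. c i * fib (2 * i) = 0" by simp
qed

lemma rep_iff: "is_CG_rep n c \<longleftrightarrow> validc c \<and> (\<exists>j. (\<forall>i>j. c i = 0) \<and> n = sm c j)"
proof
  assume r: "is_CG_rep n c"
  then have fin: "finite {i. c i \<noteq> 0}" by (simp add: is_CG_rep_def)
  then obtain j where j: "\<forall>i\<in>{i. c i \<noteq> 0}. i \<le> j" using finite_nat_set_iff_bounded_le by blast
  have s: "\<forall>i>j. c i = 0"
  proof (intro allI impI)
    fix i assume "j < i" then show "c i = 0" using j by (metis mem_Collect_eq not_le)
  qed
  have "validc c" using r by (simp add: is_CG_rep_def validc_def)
  moreover have "n = sm c j" using r sm_eq_sum[OF s] by (simp add: is_CG_rep_def)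
  ultimately show "validc c \<and> (\<exists>j. (\<forall>i>j. c i = 0) \<and> n = sm c j)" using s by blast
next
  assume "validc c \<and> (\<exists>j. (\<forall>i>j. c i = 0) \<and> n = sm c j)"
  then obtain j where v: "validc c" and s: "\<forall>i>j. c i = 0" and n: "n = sm c j" by blast
  have "{i. c i \<noteq> 0} \<subseteq> {..j}"
  proof
    fix x assume "x \<in> {i. c i \<noteq> 0}"
    then have "c x \<noteq> 0" by simp
    then have "\<not> j < x" using s by (metis)
    then show "x \<in> {..j}" by simp
  qed
  then have "finite {i. c i \<noteq> 0}" using finite_subset by blast
  then show "is_CG_rep n c" using v n sm_eq_sum[OF s] by (simp add: is_CG_rep_def validc_def)
qed

lemma uniq_rep: assumes "is_CG_rep n c" "is_CG_rep n d" shows "c = d"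
proof -
  obtain j1 where v1: "validc c" and s1: "\<forall>i>j1. c i = 0" and n1: "n = sm c j1"
    using assms(1) rep_iff by blast
  obtain j2 where v2: "validc d" and s2: "\<forall>i>j2. d i = 0" and n2: "n = sm d j2"
    using assms(2) rep_iff by blast
  define J where "J = max j1 j2"
  have t1: "\<forall>i>J. c i = 0" using s1 unfolding J_def by simp
  have t2: "\<forall>i>J. d i = 0" using s2 unfolding J_def by simp
  have "sm c J = sm c j1" using sm_eq_sum[OF t1] sm_eq_sum[OF s1] by simp
  moreover have "sm d J = sm d j2" using sm_eq_sum[OF t2] sm_eq_sum[OF s2] by simp
  ultimately have "sm c J = sm d J" using n1 n2 by simp
  moreover have "\<forall>i>J. c i = d i" using t1 t2 by simp
  ultimately show ?thesis using uniq_aux v1 v2 by blast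
qed

lemma coeff_eq: "is_CG_rep n c \<Longrightarrow> CG_coeff n = c"
  unfolding CG_coeff_def using uniq_rep by blast

lemma coeff_rep: "is_CG_rep n (CG_coeff n)"
proof -
  obtain c where "validc c" "\<forall>i>n. c i = 0" "sm c n = n" using exist[of n] n_lt_fib[of n] by blast
  then have "is_CG_rep n c" using rep_iff by metis
  then show ?thesis using coeff_eq by simp
qed

lemma upd0_valid: assumes "validc c" shows "validc (c(K := 0))"
  unfolding validc_def
proof (intro conjI allI impI)
  show "(c(K := 0)) 0 = 0" using assms by (simp add: validc_def)
  fix i show "(c(K := 0)) i \<le> 2" using assms by (simp add: validc_def)
next
  fix i i' assume h: "i < i' \<and> (c(K := 0)) i = 2 \<and> (c(K := 0)) i' = 2"
  have H: "\<And>a b. a < b \<Longrightarrow> c a = 2 \<Longrightarrow> c b = 2 \<Longrightarrow> \<exists>k. a < k \<and> k < b \<and> c k = 0"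
    using assms unfolding validc_def by blast
  have a: "i \<noteq> K" "i' \<noteq> K" using h by (metis fun_upd_same zero_neq_numeral)+
  have "c i = 2" "c i' = 2" using h a by simp_all
  then obtain z where z: "i < z" "z < i'" "c z = 0" using H h by blast
  have "(c(K := 0)) z = 0" using z(3) by simp
  then show "\<exists>k>i. k < i' \<and> (c(K := 0)) k = 0" using z(1,2) by blast
qed

lemma gsm: "strict_mono (\<lambda>i. fib (2*i))"
  unfolding strict_mono_Suc_iff
proof
  fix n
  have "0 < fib (2*n+1)" by (rule fib_neq_0_nat) simp
  then show "fib (2*n) < fib (2 * Suc n)" using fibE(1)[of n] by simp
qed

lemma gmono: "mono (\<lambda>i. fib (2*i))"
  using gsm by (rule strict_mono_mono)

lemma ginj: "fib (2*a) = fib (2*b) \<longleftrightarrow> a = b"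
  using strict_mono_eq[OF gsm] by simp

lemma CG_img: assumes "validc (CG_coeff n)"
  shows "CG n = (\<lambda>i. fib (2*i)) ` {i. CG_coeff n i \<noteq> 0}"
proof -
  have "{i. 1 \<le> i \<and> CG_coeff n i \<noteq> 0} = {i. CG_coeff n i \<noteq> 0}"
  proof (rule set_eqI)
    fix x show "x \<in> {i. 1 \<le> i \<and> CG_coeff n i \<noteq> 0} \<longleftrightarrow> x \<in> {i. CG_coeff n i \<noteq> 0}"
      using assms by (cases x) (simp_all add: validc_def)
  qed
  moreover have "CG n = (\<lambda>i. fib (2*i)) ` {i. 1 \<le> i \<and> CG_coeff n i \<noteq> 0}"
    unfolding CG_def by blast
  ultimately show ?thesis by simp
qed

lemma CG2_img: assumes "validc (CG_coeff n)"
  shows "CG2 n = (\<lambda>i. fib (2*i)) ` {i. CG_coeff n i = 2}"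
proof -
  have "{i. 1 \<le> i \<and> CG_coeff n i = 2} = {i. CG_coeff n i = 2}"
  proof (rule set_eqI)
    fix x show "x \<in> {i. 1 \<le> i \<and> CG_coeff n i = 2} \<longleftrightarrow> x \<in> {i. CG_coeff n i = 2}"
      using assms by (cases x) (simp_all add: validc_def)
  qed
  moreover have "CG2 n = (\<lambda>i. fib (2*i)) ` {i. 1 \<le> i \<and> CG_coeff n i = 2}"
    unfolding CG2_def by blast
  ultimately show ?thesis by simp
qed

lemma Min_img: "finite S \<Longrightarrow> S \<noteq> {} \<Longrightarrow> Min ((\<lambda>i. fib (2*i)) ` S) = fib (2 * Min S)"
  using mono_Min_commute[OF gmono] by metis

lemma Max_img: "finite S \<Longrightarrow> S \<noteq> {} \<Longrightarrow> Max ((\<lambda>i. fib (2*i)) ` S) = fib (2 * Max S)"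
  using mono_Max_commute[OF gmono] by metis

lemma shift_sum: "(\<Sum>i<l. fib (2*k+2*i)) = (\<Sum>i\<in>{k..<k+l}. fib (2*i))"
proof (induction l)
  case 0 then show ?case by simp
next
  case (Suc l)
  have "(\<Sum>i\<in>{k..<k + Suc l}. fib (2*i)) = (\<Sum>i\<in>{k..<k+l}. fib (2*i)) + fib (2*(k+l))"
    using sum.atLeastLessThan_Suc[of k "k+l" "\<lambda>i. fib (2*i)"] by simp
  then show ?case using Suc.IH by (simp add: algebra_simps)
qed


lemma sm_ge_term: "i \<le> J \<Longrightarrow> c i * fib (2*i) \<le> sm c J"
  unfolding sm_def by (rule member_le_sum) simp_all

lemma sum_ge_term: "finite {i. c i \<noteq> 0} \<Longrightarrow> c i \<noteq> 0 \<Longrightarrow> c i * fib (2*i) \<le> (\<Sum>i\<in>{i. c i \<noteq> 0}. c i * fib (2*i))"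
  by (rule member_le_sum) simp_all

lemma lower_lt: "k \<le> i \<Longrightarrow> 1 \<le> i \<Longrightarrow> (\<Sum>z\<in>{k..<i}. fib (2*z)) < fib (2*i)"
proof -
  assume "1 \<le> i"
  then obtain i0 where "i = Suc i0" by (cases i) auto
  then show ?thesis using Tlt[of k i0] by (simp add: atLeastLessThanSuc_atLeastAtMost)
qed

lemma big_block:
  assumes "d i = 2" "i \<le> J" "\<forall>z. i < z \<and> z \<le> J \<longrightarrow> d z \<noteq> 0"
  shows "fib (2*i) + (\<Sum>z\<in>{i..J}. fib (2*z)) \<le> (\<Sum>z\<in>{i..J}. d z * fib (2*z))"
proof -
  have "(\<Sum>z\<in>{i..J}. fib (2*z) + (if z = i then fib (2*i) else 0)) \<le> (\<Sum>z\<in>{i..J}. d z * fib (2*z))"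
  proof (rule sum_mono)
    fix z assume z: "z \<in> {i..J}"
    show "fib (2*z) + (if z = i then fib (2*i) else 0) \<le> d z * fib (2*z)"
    proof (cases "z = i")
      case True then show ?thesis using assms(1) by simp
    next
      case False
      then have "i < z" "z \<le> J" using z by auto
      then have "d z \<noteq> 0" using assms(3) by simp
      then have "1 * fib (2*z) \<le> d z * fib (2*z)" by (intro mult_le_mono1) simp
      then show ?thesis using False by simp
    qed
  qed
  moreover have "(\<Sum>z\<in>{i..J}. fib (2*z) + (if z = i then fib (2*i) else 0)) = (\<Sum>z\<in>{i..J}. fib (2*z)) + fib (2*i)"
    using assms(2) by (simp add: sum.distrib)
  ultimately show ?thesis by simp
qed

theorem lemma3p6:
  fixes k l :: nat
  assumes "k \<ge> 1" and "l \<ge> 1"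
  shows "{n \<in> A k. CG2 n \<noteq> {} \<and> Max (CG n) = fib (2 * k + 2 * l) \<and> Max (CG2 n) = fib (2 * k + 2 * l)}
       = {m + 2 * fib (2 * k + 2 * l) | m. m \<in> A k \<and> m \<le> (\<Sum>i<l. fib (2 * k + 2 * i))}"
proof -
  define K where "K = k + l"
  define J where "J = k + l - 1"
  have KJ: "K = Suc J" using assms(2) unfolding K_def J_def by simp
  have kJ: "k \<le> J" using assms(2) unfolding J_def by simp
  have FK: "fib (2 * k + 2 * l) = fib (2 * K)" unfolding K_def by (simp add: algebra_simps)
  define T where "T = (\<Sum>i\<in>{k..J}. fib (2*i))"
  have Tsum: "(\<Sum>i<l. fib (2 * k + 2 * i)) = T"
    unfolding T_def shift_sum using KJ K_def by (simp add: atLeastLessThanSuc_atLeastAtMost)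
  have TK: "T < fib (2*K)" unfolding T_def KJ by (rule Tlt)
  have Gk: "1 \<le> fib (2*k)" using fib_neq_0_nat[of "2*k"] assms(1) by simp
  show ?thesis
  proof (intro set_eqI iffI)
    fix n
    assume "n \<in> {n \<in> A k. CG2 n \<noteq> {} \<and> Max (CG n) = fib (2 * k + 2 * l) \<and> Max (CG2 n) = fib (2 * k + 2 * l)}"
    then have nA: "1 \<le> n" "Min (CG n) = fib (2*k)" and n2: "CG2 n \<noteq> {}"
      and nmax: "Max (CG n) = fib (2*K)" "Max (CG2 n) = fib (2*K)"
      unfolding A_def FK by auto
    define c where "c = CG_coeff n"
    have rc: "is_CG_rep n c" unfolding c_def by (rule coeff_rep)
    then obtain j where vc: "validc c" and sj: "\<forall>i>j. c i = 0" and nj: "n = sm c j"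
      using rep_iff by metis
    define S where "S = {i. c i \<noteq> 0}"
    define S2 where "S2 = {i. c i = 2}"
    have finS: "finite S" using rc unfolding S_def is_CG_rep_def by simp
    have S2S: "S2 \<subseteq> S" unfolding S_def S2_def by auto
    have finS2: "finite S2" using finS S2S finite_subset by blast
    have nS: "n = (\<Sum>i\<in>S. c i * fib (2*i))" unfolding S_def using nj sm_eq_sum[OF sj] by simp
    have Sne: "S \<noteq> {}" using nS nA(1) by auto
    have CGn: "CG n = (\<lambda>i. fib (2*i)) ` S" unfolding S_def c_def using CG_img vc c_def by simp
    have CG2n: "CG2 n = (\<lambda>i. fib (2*i)) ` S2" unfolding S2_def c_def using CG2_img vc c_def by simp
    have S2ne: "S2 \<noteq> {}" using n2 CG2n by auto
    have minS: "Min S = k" using nA(2) Min_img[OF finS Sne] CGn ginj by simp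
    have maxS: "Max S = K" using nmax(1) Max_img[OF finS Sne] CGn ginj by simp
    have maxS2: "Max S2 = K" using nmax(2) Max_img[OF finS2 S2ne] CG2n ginj by simp
    have cK: "c K = 2" using Max_in[OF finS2 S2ne] maxS2 unfolding S2_def by simp
    have hi: "c i = 0" if "K < i" for i
    proof (rule ccontr)
      assume "c i \<noteq> 0" then have "i \<in> S" unfolding S_def by simp
      then have "i \<le> Max S" using finS by simp
      then show False using that maxS by simp
    qed
    have lo: "c i = 0" if "i < k" for i
    proof (rule ccontr)
      assume "c i \<noteq> 0" then have "i \<in> S" unfolding S_def by simp
      then have "Min S \<le> i" using finS by simp
      then show False using that minS by simp
    qed
    have ck: "c k \<noteq> 0" using Min_in[OF finS Sne] minS unfolding S_def by simp
    define d where "d = c(K := 0)"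
    have vd: "validc d" unfolding d_def by (rule upd0_valid[OF vc])
    have sd: "\<forall>i>J. d i = 0"
    proof (intro allI impI)
      fix i assume "J < i"
      then consider "i = K" | "K < i" using KJ by linarith
      then show "d i = 0" unfolding d_def using hi by cases simp_all
    qed
    define m where "m = sm d J"
    have rd: "is_CG_rep m d" using rep_iff vd sd m_def by metis
    have cd: "CG_coeff m = d" using coeff_eq[OF rd] .
    have sK: "\<forall>i>K. c i = 0" using hi by simp
    have "n = sm c K" using nj sm_eq_sum[OF sj] sm_eq_sum[OF sK] by simp
    also have "\<dots> = sm c J + c K * fib (2*K)" unfolding KJ by (rule sm_Suc)
    also have "sm c J = m" unfolding m_def d_def
    proof -
      have "(\<Sum>i\<le>J. (c(K := 0)) i * fib (2*i)) = (\<Sum>i\<le>J. c i * fib (2*i))"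
        by (rule sum.cong) (use KJ in auto)
      then show "sm c J = sm (c(K := 0)) J" by (simp add: sm_def)
    qed
    finally have nm: "n = m + 2 * fib (2*K)" using cK by simp
    have dk: "d k = c k" unfolding d_def using kJ KJ by simp
    have p2: "d k * fib (2*k) \<le> m" unfolding m_def by (rule sm_ge_term[OF kJ])
    have p1: "1 * 1 \<le> d k * fib (2*k)" using dk ck Gk by (intro mult_le_mono) simp_all
    have "1 * 1 \<le> m" by (rule le_trans[OF p1 p2])
    then have m1: "1 \<le> m" by simp
    define Sd where "Sd = {i. d i \<noteq> 0}"
    have finSd: "finite Sd" using rd unfolding Sd_def is_CG_rep_def by simp
    have kSd: "k \<in> Sd" unfolding Sd_def using dk ck by simp
    have Sdne: "Sd \<noteq> {}" using kSd by auto
    have minSd: "Min Sd = k"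
    proof (rule Min_eqI[OF finSd _ kSd])
      fix y assume "y \<in> Sd"
      then have "d y \<noteq> 0" unfolding Sd_def by simp
      then have "c y \<noteq> 0" unfolding d_def by (cases "y = K") simp_all
      then show "k \<le> y" using lo by (meson not_le)
    qed
    have vdc: "validc (CG_coeff m)" using cd vd by simp
    have CGm: "CG m = (\<lambda>i. fib (2*i)) ` Sd" unfolding Sd_def using CG_img[OF vdc] cd by simp
    have mA: "m \<in> A k" unfolding A_def using m1 CGm Min_img[OF finSd Sdne] minSd by simp
    have cld: "closedc d J"
      unfolding closedc_def
    proof (intro allI impI)
      fix i assume i: "i \<le> J" "d i = 2"
      have H: "\<And>a b. a < b \<Longrightarrow> c a = 2 \<Longrightarrow> c b = 2 \<Longrightarrow> \<exists>k. a < k \<and> k < b \<and> c k = 0"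
        using vc unfolding validc_def by blast
      have iK: "i < K" using i KJ by simp
      have "c i = 2" using i(2) iK unfolding d_def by simp
      then obtain z where z: "i < z" "z < K" "c z = 0" using H[OF iK _ cK] by blast
      have "z \<le> J" using z(2) KJ by simp
      moreover have "d z = 0" using z(2,3) unfolding d_def by simp
      ultimately show "\<exists>z. i < z \<and> z \<le> J \<and> d z = 0" using z(1) by blast
    qed
    have "m = (\<Sum>i\<in>{k..J}. d i * fib (2*i))" unfolding m_def sm_def
    proof (rule sum.mono_neutral_right)
      show "finite {..J}" by simp
      show "{k..J} \<subseteq> {..J}" by auto
      show "\<forall>i\<in>{..J} - {k..J}. d i * fib (2 * i) = 0"
      proof
        fix i assume "i \<in> {..J} - {k..J}"
        then have "i < k" by auto
        then have "c i = 0" "i \<noteq> K" using lo kJ KJ by auto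
        then show "d i * fib (2 * i) = 0" unfolding d_def by simp
      qed
    qed
    also have "\<dots> \<le> T" unfolding T_def using blockB[OF vd, of k J] cld by blast
    finally have mT: "m \<le> T" .
    show "n \<in> {m + 2 * fib (2 * k + 2 * l) | m. m \<in> A k \<and> m \<le> (\<Sum>i<l. fib (2 * k + 2 * i))}"
      using nm mA mT unfolding FK Tsum by blast
  next
    fix n
    assume "n \<in> {m + 2 * fib (2 * k + 2 * l) | m. m \<in> A k \<and> m \<le> (\<Sum>i<l. fib (2 * k + 2 * i))}"
    then obtain m where nm: "n = m + 2 * fib (2*K)" and mA: "m \<in> A k" and mT: "m \<le> T"
      unfolding FK Tsum by blast
    have m1: "1 \<le> m" and mmin: "Min (CG m) = fib (2*k)" using mA unfolding A_def by auto
    define d where "d = CG_coeff m"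
    have rd: "is_CG_rep m d" unfolding d_def by (rule coeff_rep)
    then obtain j where vd: "validc d" and sj: "\<forall>i>j. d i = 0" and mj: "m = sm d j"
      using rep_iff by metis
    define Sd where "Sd = {i. d i \<noteq> 0}"
    have finSd: "finite Sd" using rd unfolding Sd_def is_CG_rep_def by simp
    have mS: "m = (\<Sum>i\<in>Sd. d i * fib (2*i))" unfolding Sd_def using mj sm_eq_sum[OF sj] by simp
    have Sdne: "Sd \<noteq> {}" using mS m1 by auto
    have CGm: "CG m = (\<lambda>i. fib (2*i)) ` Sd" unfolding Sd_def d_def using CG_img vd d_def by simp
    have minSd: "Min Sd = k" using mmin Min_img[OF finSd Sdne] CGm ginj by simp
    have lo: "d i = 0" if "i < k" for i
    proof (rule ccontr)
      assume "d i \<noteq> 0" then have "i \<in> Sd" unfolding Sd_def by simp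
      then have "Min Sd \<le> i" using finSd by simp
      then show False using that minSd by simp
    qed
    have dk: "d k \<noteq> 0" using Min_in[OF finSd Sdne] minSd unfolding Sd_def by simp
    have hi: "d i = 0" if "J < i" for i
    proof (rule ccontr)
      assume di: "d i \<noteq> 0"
      have "d i * fib (2*i) \<le> m" unfolding mS Sd_def using finSd di unfolding Sd_def
        by (rule sum_ge_term)
      moreover have "1 * fib (2*K) \<le> d i * fib (2*i)"
        using di that KJ by (intro mult_le_mono fib_mono) simp_all
      ultimately show False using mT TK by simp
    qed
    have sJ: "\<forall>i>J. d i = 0" using hi by simp
    have mJ: "m = sm d J" using mj sm_eq_sum[OF sj] sm_eq_sum[OF sJ] by simp
    have cld: "closedc d J"
      unfolding closedc_def
    proof (intro allI impI)
      fix i assume i: "i \<le> J" "d i = 2"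
      show "\<exists>z. i < z \<and> z \<le> J \<and> d z = 0"
      proof (rule ccontr)
        assume "\<not> (\<exists>z. i < z \<and> z \<le> J \<and> d z = 0)"
        then have nz: "\<forall>z. i < z \<and> z \<le> J \<longrightarrow> d z \<noteq> 0" by simp
        have ki: "k \<le> i" using lo i(2) by (metis not_le zero_neq_numeral)
        have i1: "1 \<le> i" using ki assms(1) by simp
        have b1: "fib (2*i) + (\<Sum>z\<in>{i..J}. fib (2*z)) \<le> (\<Sum>z\<in>{i..J}. d z * fib (2*z))"
          by (rule big_block[OF i(2,1) nz])
        have b2: "(\<Sum>z\<in>{i..J}. d z * fib (2*z)) \<le> m" unfolding mJ sm_def
          by (rule sum_mono2) auto
        have "{k..J} = {k..<i} \<union> {i..J}" using ki i(1) by auto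
        then have b3: "T = (\<Sum>z\<in>{k..<i}. fib (2*z)) + (\<Sum>z\<in>{i..J}. fib (2*z))"
          unfolding T_def by (simp add: sum.union_disjoint ivl_disj_int)
        have b4: "(\<Sum>z\<in>{k..<i}. fib (2*z)) < fib (2*i)" by (rule lower_lt[OF ki i1])
        show False using b1 b2 b3 b4 mT by linarith
      qed
    qed
    define c where "c = d(K := 2)"
    have vc: "validc c" unfolding c_def KJ by (rule upd2_valid[OF vd sJ cld])
    have sc: "\<forall>i>K. c i = 0"
    proof (intro allI impI)
      fix i assume "K < i"
      then have "i \<noteq> K" "J < i" using KJ by simp_all
      then show "c i = 0" unfolding c_def using hi by simp
    qed
    have nsm: "n = sm c K" unfolding c_def KJ sm_upd using mJ nm KJ by simp
    have rc: "is_CG_rep n c" using rep_iff vc sc nsm by metis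
    have cc: "CG_coeff n = c" using coeff_eq[OF rc] .
    define S where "S = {i. c i \<noteq> 0}"
    define S2 where "S2 = {i. c i = 2}"
    have finS: "finite S" using rc unfolding S_def is_CG_rep_def by simp
    have "S2 \<subseteq> S" unfolding S_def S2_def by auto
    then have finS2: "finite S2" using finS finite_subset by blast
    have KS: "K \<in> S" "K \<in> S2" unfolding S_def S2_def c_def by simp_all
    have Sne: "S \<noteq> {}" "S2 \<noteq> {}" using KS by auto
    have vcc: "validc (CG_coeff n)" using cc vc by simp
    have CGn: "CG n = (\<lambda>i. fib (2*i)) ` S" unfolding S_def using CG_img[OF vcc] cc by simp
    have CG2n: "CG2 n = (\<lambda>i. fib (2*i)) ` S2" unfolding S2_def using CG2_img[OF vcc] cc by simp
    have kK: "k \<le> K" using kJ KJ by simp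
    have upper: "y \<le> K" if "c y \<noteq> 0" for y
    proof (rule ccontr)
      assume "\<not> y \<le> K" then have "K < y" by simp
      then show False using sc that by simp
    qed
    have minS: "Min S = k"
    proof (rule Min_eqI[OF finS])
      fix y assume "y \<in> S"
      then have cy: "c y \<noteq> 0" unfolding S_def by simp
      show "k \<le> y"
      proof (cases "y = K")
        case True then show ?thesis using kK by simp
      next
        case False
        then have "d y \<noteq> 0" using cy unfolding c_def by simp
        then show ?thesis using lo by (meson not_le)
      qed
    next
      have "k \<noteq> K" using kJ KJ by simp
      then show "k \<in> S" unfolding S_def c_def using dk by simp
    qed
    have maxS: "Max S = K"
      by (rule Max_eqI[OF finS _ KS(1)]) (use upper in \<open>simp add: S_def\<close>)
    have maxS2: "Max S2 = K"
      by (rule Max_eqI[OF finS2 _ KS(2)]) (use upper in \<open>simp add: S2_def\<close>)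
    have n1: "1 \<le> n" using nm m1 by simp
    have "n \<in> A k" unfolding A_def using n1 CGn Min_img[OF finS Sne(1)] minS by simp
    moreover have "CG2 n \<noteq> {}" using CG2n Sne(2) by simp
    moreover have "Max (CG n) = fib (2*K)" using CGn Max_img[OF finS Sne(1)] maxS by simp
    moreover have "Max (CG2 n) = fib (2*K)" using CG2n Max_img[OF finS2 Sne(2)] maxS2 by simp
    ultimately show "n \<in> {n \<in> A k. CG2 n \<noteq> {} \<and> Max (CG n) = fib (2 * k + 2 * l) \<and> Max (CG2 n) = fib (2 * k + 2 * l)}"
      unfolding FK by simp
  qed
qed

end
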